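(* Let $S$ be a powerful multiset over a finite set $E$ such that $r_S(X)\le |X|$ for all $X\subseteq E$. Then $S$ is (isomorphic to) a linear powerful set.
   Context: A multiset over $E$ has indicator function $f:2^E\to\mathbb{Z}_{\ge0}$ giving multiplicities, with $f(\emptyset)\neq0$ assumed; its rank function is $r_S(X)=\log_2\Big(\sum_{Y\subseteq E} f(Y)\big/\sum_{Y\subseteq E\setminus X} f(Y)\Big)$, and $S$ is a powerful multiset if $r_S(X)\in\mathbb{Z}$ for all $X\subseteq E$. Two powerful multisets with indicator functions $f_1,f_2$ on ground sets $E_1,E_2$ are isomorphic if there is a bijection $\phi:E_1\to E_2$ and $\alpha\in\mathbb{R}\setminus\{0\}$ with $f_1(X)=\alpha f_2(\phi(X))$ for all $X$. A powerful set is a set $S\subseteq 2^E$ such that for every $X\subseteq E$ the number of members of $S$ contained in $X$ is a power of 2; it is linear if it is a binary linear space, i.e. $\emptyset\in S$ and $S$ is closed under symmetric difference. *)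

theory Defs
  imports Complex_Main
begin

text \<open>A multiset over ground set E is given by its indicator function
  f :: 'a set => nat (only values on subsets of E matter).\<close>

definition rank_ms :: "'a set \<Rightarrow> ('a set \<Rightarrow> nat) \<Rightarrow> 'a set \<Rightarrow> real" where
  "rank_ms E f X = log 2 (real (\<Sum>Y\<in>Pow E. f Y) / real (\<Sum>Y\<in>Pow (E - X). f Y))"

definition powerful_multiset :: "'a set \<Rightarrow> ('a set \<Rightarrow> nat) \<Rightarrow> bool" where
  "powerful_multiset E f \<longleftrightarrow> f {} \<noteq> 0 \<and> (\<forall>X. X \<subseteq> E \<longrightarrow> rank_ms E f X \<in> \<int>)"

definition powerful_set :: "'a set \<Rightarrow> 'a set set \<Rightarrow> bool" where
  "powerful_set E S \<longleftrightarrow> S \<subseteq> Pow E \<and>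
     (\<forall>X. X \<subseteq> E \<longrightarrow> (\<exists>k::nat. card {Y \<in> S. Y \<subseteq> X} = 2 ^ k))"

definition linear_set :: "'a set set \<Rightarrow> bool" where
  "linear_set S \<longleftrightarrow> {} \<in> S \<and> (\<forall>A\<in>S. \<forall>B\<in>S. (A - B) \<union> (B - A) \<in> S)"

definition set_indicator :: "'a set set \<Rightarrow> 'a set \<Rightarrow> nat" where
  "set_indicator S Y = (if Y \<in> S then 1 else 0)"

definition ms_isomorphic ::
  "'a set \<Rightarrow> ('a set \<Rightarrow> nat) \<Rightarrow> 'b set \<Rightarrow> ('b set \<Rightarrow> nat) \<Rightarrow> bool" where
  "ms_isomorphic E1 f1 E2 f2 \<longleftrightarrow>
     (\<exists>\<phi> (\<alpha>::real). bij_betw \<phi> E1 E2 \<and> \<alpha> \<noteq> 0 \<and>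
        (\<forall>X. X \<subseteq> E1 \<longrightarrow> real (f1 X) = \<alpha> * real (f2 (\<phi> ` X))))"

end

theory Submission
  imports Defs
begin

definition symd :: "'a set \<Rightarrow> 'a set \<Rightarrow> 'a set" where
  "symd A B = (A - B) \<union> (B - A)"

definition GS :: "('a set \<Rightarrow> nat) \<Rightarrow> 'a set \<Rightarrow> nat" where
  "GS f Z = (\<Sum>Y\<in>Pow Z. f Y)"

definition HYP :: "'a set \<Rightarrow> ('a set \<Rightarrow> nat) \<Rightarrow> bool" where
  "HYP E f \<longleftrightarrow> f {} \<noteq> 0 \<and> (\<forall>X. X \<subseteq> E \<longrightarrow> (\<exists>k. k \<le> card X \<and> GS f E = 2^k * GS f (E - X)))"

definition CONC :: "'a set \<Rightarrow> ('a set \<Rightarrow> nat) \<Rightarrow> bool" where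
  "CONC E f \<longleftrightarrow> (\<exists>c L. c > 0 \<and> L \<subseteq> Pow E \<and> {} \<in> L \<and> (\<forall>A\<in>L. \<forall>B\<in>L. symd A B \<in> L) \<and>
      (\<forall>Y. Y \<subseteq> E \<longrightarrow> f Y = (if Y \<in> L then c else 0)))"

lemma GS_insert:
  assumes "finite Z" "e \<notin> Z"
  shows "GS f (insert e Z) = GS f Z + (\<Sum>Y\<in>Pow Z. f (insert e Y))"
proof -
  have inj: "inj_on (insert e) (Pow Z)" using assms(2) unfolding inj_on_def by (metis Pow_iff insert_ident subsetD)
  have disj: "Pow Z \<inter> insert e ` Pow Z = {}" using assms(2) by auto
  have "GS f (insert e Z) = (\<Sum>Y\<in>Pow Z \<union> insert e ` Pow Z. f Y)"
    by (simp add: GS_def Pow_insert)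
  also have "\<dots> = GS f Z + (\<Sum>Y\<in>insert e ` Pow Z. f Y)"
    using disj assms(1) by (simp add: GS_def sum.union_disjoint)
  also have "(\<Sum>Y\<in>insert e ` Pow Z. f Y) = (\<Sum>Y\<in>Pow Z. f (insert e Y))"
    using inj by (simp add: sum.reindex)
  finally show ?thesis .
qed

lemma GS_mono: "finite Z \<Longrightarrow> A \<subseteq> Z \<Longrightarrow> GS f A \<le> GS f Z"
  unfolding GS_def by (rule sum_mono2) auto

lemma GS_pos: "finite Z \<Longrightarrow> f {} \<noteq> 0 \<Longrightarrow> GS f Z > 0"
proof -
  assume "finite Z" "f {} \<noteq> 0"
  then have "f {} \<le> GS f Z" unfolding GS_def by (intro member_le_sum) auto
  with \<open>f {} \<noteq> 0\<close> show ?thesis by simp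
qed

lemma sum_ind:
  assumes "finite Z" "L \<subseteq> Pow Z"
  shows "(\<Sum>Y\<in>Pow Z. if Y \<in> L then c else 0) = c * card L"
proof -
  have "(\<Sum>Y\<in>Pow Z. if Y \<in> L then c else 0) = (\<Sum>Y\<in>Pow Z \<inter> L. c)"
    using assms(1) by (simp add: sum.inter_restrict[symmetric])
  also have "Pow Z \<inter> L = L" using assms by auto
  finally show ?thesis by simp
qed

lemma assemble:
  assumes F: "finite F" "e \<notin> F" and c0: "c0 > 0"
    and L0: "L0 \<subseteq> Pow F" "{} \<in> L0" "\<forall>A\<in>L0. \<forall>B\<in>L0. symd A B \<in> L0"
    and M: "M \<subseteq> Pow F"
    and cl1: "\<And>A B. A \<in> L0 \<Longrightarrow> B \<in> M \<Longrightarrow> symd A B \<in> M"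
    and cl2: "\<And>A B. A \<in> M \<Longrightarrow> B \<in> M \<Longrightarrow> symd A B \<in> L0"
    and f0: "\<And>Y. Y \<subseteq> F \<Longrightarrow> f Y = (if Y \<in> L0 then c0 else 0)"
    and f1: "\<And>Y. Y \<subseteq> F \<Longrightarrow> f (insert e Y) = (if Y \<in> M then c0 else 0)"
  shows "CONC (insert e F) f"
  unfolding CONC_def
proof (intro exI[of _ c0] exI[of _ "L0 \<union> insert e ` M"] conjI allI impI ballI)
  show "c0 > 0" by fact
  show "L0 \<union> insert e ` M \<subseteq> Pow (insert e F)" using L0 M by auto
  show "{} \<in> L0 \<union> insert e ` M" using L0 by auto
next
  have sdc: "symd A B = symd B A" for A B :: "'a set" unfolding symd_def by blast
  have s1: "symd (insert e A) (insert e B) = symd A B" if "e \<notin> A" "e \<notin> B" for A B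
    using that unfolding symd_def by blast
  have s2: "symd A (insert e B) = insert e (symd A B)" if "e \<notin> A" "e \<notin> B" for A B
    using that unfolding symd_def by blast
  have s3: "symd (insert e A) B = insert e (symd A B)" if "e \<notin> A" "e \<notin> B" for A B
    using that unfolding symd_def by blast
  have nL0: "e \<notin> A" if "A \<in> L0" for A using that L0(1) F(2) by auto
  have nM: "e \<notin> A" if "A \<in> M" for A using that M F(2) by auto
  fix A B assume A: "A \<in> L0 \<union> insert e ` M" and B: "B \<in> L0 \<union> insert e ` M"
  show "symd A B \<in> L0 \<union> insert e ` M"
  proof (cases "A \<in> L0")
    case True
    show ?thesis
    proof (cases "B \<in> L0")
      case True with \<open>A \<in> L0\<close> L0(3) show ?thesis by auto
    next
      case False
      then obtain B' where B': "B' \<in> M" "B = insert e B'" using B by auto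
      then show ?thesis using s2[OF nL0[OF \<open>A\<in>L0\<close>] nM[OF B'(1)]] cl1[OF True B'(1)] by auto
    qed
  next
    case False
    then obtain A' where A': "A' \<in> M" "A = insert e A'" using A by auto
    show ?thesis
    proof (cases "B \<in> L0")
      case True
      then show ?thesis using s3[OF nM[OF A'(1)] nL0[OF True]] cl1[OF True A'(1)] A' sdc by auto
    next
      case False
      then obtain B' where B': "B' \<in> M" "B = insert e B'" using B by auto
      then show ?thesis using s1[OF nM[OF A'(1)] nM[OF B'(1)]] cl2[OF A'(1) B'(1)] A' by auto
    qed
  qed
next
  fix Y assume Y: "Y \<subseteq> insert e F"
  show "f Y = (if Y \<in> L0 \<union> insert e ` M then c0 else 0)"
  proof (cases "e \<in> Y")
    case True
    define Y' where "Y' = Y - {e}"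
    have Y': "Y' \<subseteq> F" "Y = insert e Y'" "e \<notin> Y'" using Y True by (auto simp: Y'_def)
    have "Y \<notin> L0" using True L0(1) F(2) by auto
    moreover have "Y \<in> insert e ` M \<longleftrightarrow> Y' \<in> M"
    proof
      assume "Y \<in> insert e ` M"
      then obtain Z where "Z \<in> M" "Y = insert e Z" by auto
      moreover have "e \<notin> Z" using \<open>Z \<in> M\<close> M F(2) by auto
      ultimately have "Z = Y'" using Y'(2,3) by (metis Diff_insert_absorb)
      then show "Y' \<in> M" using \<open>Z \<in> M\<close> by simp
    qed (use Y' in auto)
    ultimately show ?thesis using f1[OF Y'(1)] Y'(2) by auto
  next
    case False
    then have "Y \<subseteq> F" using Y by auto
    moreover have "Y \<notin> insert e ` M" using False by auto
    ultimately show ?thesis using f0 by auto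
  qed
qed

lemma key:
  assumes "finite E"
  shows "HYP E f \<Longrightarrow> CONC E f"
  using assms
proof (induction E arbitrary: f rule: finite_induct)
  case empty
  then show ?case unfolding CONC_def HYP_def
    by (intro exI[of _ "f {}"] exI[of _ "{{}}"]) (auto simp: symd_def)
next
  case (insert e F f)
  define E where "E = insert e F"
  have fin: "finite E" using insert by (simp add: E_def)
  have f0ne: "f {} \<noteq> 0" and HE: "\<And>X. X \<subseteq> E \<Longrightarrow> \<exists>k. k \<le> card X \<and> GS f E = 2^k * GS f (E - X)"
    using insert(4) unfolding HYP_def E_def by auto
  define N where "N = GS f E"
  define f' where "f' = (\<lambda>Y. f Y + f (insert e Y))"
  have G'[simp]: "GS f' Z = GS f (insert e Z)" if "Z \<subseteq> F" for Z
  proof -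
    have "finite Z" "e \<notin> Z" using that insert(1,2) finite_subset by auto
    then show ?thesis using GS_insert[of Z e f] by (simp add: GS_def f'_def sum.distrib)
  qed
  have HF': "HYP F f'" unfolding HYP_def
  proof (intro conjI allI impI)
    show "f' {} \<noteq> 0" using f0ne by (simp add: f'_def)
    fix X assume X: "X \<subseteq> F"
    obtain k where k: "k \<le> card X" "GS f E = 2^k * GS f (E - X)" using HE[of X] X by (auto simp: E_def)
    have "E - X = insert e (F - X)" using X insert(2) by (auto simp: E_def)
    then show "\<exists>k. k \<le> card X \<and> GS f' F = 2 ^ k * GS f' (F - X)"
      using k by (intro exI[of _ k]) (auto simp: E_def)
  qed
  obtain c' L' where c': "c' > 0" "L' \<subseteq> Pow F" "{} \<in> L'" "\<forall>A\<in>L'. \<forall>B\<in>L'. symd A B \<in> L'"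
      "\<And>Y. Y \<subseteq> F \<Longrightarrow> f' Y = (if Y \<in> L' then c' else 0)"
    using insert(3)[OF HF'] unfolding CONC_def by blast
  have GEF: "GS f E = GS f F + (\<Sum>Y\<in>Pow F. f (insert e Y))"
    using GS_insert[of F e f] insert(1,2) by (simp add: E_def)
  have GFpos: "GS f F > 0" using GS_pos[of F f] insert(1) f0ne by blast
  obtain ke where ke: "ke \<le> 1" "GS f E = 2^ke * GS f F"
    using HE[of "{e}"] insert(2) by (auto simp: E_def)
  show ?case
  proof (cases "ke = 0")
    case True
    then have "(\<Sum>Y\<in>Pow F. f (insert e Y)) = 0" using ke GEF by simp
    then have z: "f (insert e Y) = 0" if "Y \<subseteq> F" for Y
      using that insert(1) by (simp add: sum_eq_0_iff)
    show ?thesis unfolding CONC_def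
    proof (intro exI[of _ c'] exI[of _ L'] conjI allI impI)
      show "c' > 0" "{} \<in> L'" "\<forall>A\<in>L'. \<forall>B\<in>L'. symd A B \<in> L'" using c' by auto
      show "L' \<subseteq> Pow (insert e F)" using c' by auto
      fix Y assume Y: "Y \<subseteq> insert e F"
      show "f Y = (if Y \<in> L' then c' else 0)"
      proof (cases "e \<in> Y")
        case True
        then have "Y = insert e (Y - {e})" "Y - {e} \<subseteq> F" using Y by auto
        then have "f Y = 0" using z by metis
        moreover have "Y \<notin> L'" using c'(2) True insert(2) by auto
        ultimately show ?thesis by simp
      next
        case False
        then have "Y \<subseteq> F" using Y by auto
        then show ?thesis using c'(5)[of Y] z[of Y] by (simp add: f'_def)
      qed
    qed
  next
    case False
    then have ke1: "GS f E = 2 * GS f F" using ke by (cases ke) auto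
    have HF: "HYP F f" unfolding HYP_def
    proof (intro conjI allI impI)
      show "f {} \<noteq> 0" by fact
      fix X assume X: "X \<subseteq> F"
      then have "insert e X \<subseteq> E" by (auto simp: E_def)
      then obtain k where k: "k \<le> card (insert e X)" "GS f E = 2^k * GS f (E - insert e X)"
        using HE by blast
      have cX: "card (insert e X) = Suc (card X)" using X insert(1,2) finite_subset
        by (metis card_insert_disjoint subsetD)
      have EX: "E - insert e X = F - X" using insert(2) by (auto simp: E_def)
      have le: "GS f (F - X) \<le> GS f F" using GS_mono[OF insert(1)] by auto
      have "k \<noteq> 0"
      proof
        assume "k = 0"
        then have "GS f E = GS f (F - X)" using k EX by simp
        then show False using le ke1 GFpos by linarith
      qed
      then obtain j where j: "k = Suc j" by (cases k) auto
      have "2 * GS f F = 2 * (2^j * GS f (F - X))" using k(2) ke1 EX j by simp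
      then show "\<exists>k. k \<le> card X \<and> GS f F = 2 ^ k * GS f (F - X)"
        using k(1) cX j by (intro exI[of _ j]) auto
    qed
    obtain c0 L0 where c0: "c0 > 0" "L0 \<subseteq> Pow F" "{} \<in> L0" "\<forall>A\<in>L0. \<forall>B\<in>L0. symd A B \<in> L0"
        "\<And>Y. Y \<subseteq> F \<Longrightarrow> f Y = (if Y \<in> L0 then c0 else 0)"
      using insert(3)[OF HF] unfolding CONC_def by blast
    have finL': "finite L'" using c'(2) insert(1) finite_subset by (metis finite_Pow_iff)
    have finL0: "finite L0" using c0(2) insert(1) finite_subset by (metis finite_Pow_iff)
    have c0f: "c0 = f {}" using c0(5)[of "{}"] c0(3) by simp
    have c'f: "c' = f {} + f {e}" using c'(5)[of "{}"] c'(3) by (simp add: f'_def)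
    have GF: "GS f F = c0 * card L0" unfolding GS_def
      using sum_ind[OF insert(1) c0(2), of c0] c0(5) sum.cong[of "Pow F" "Pow F" f "\<lambda>Y. if Y \<in> L0 then c0 else 0"] by simp
    have GF': "GS f' F = c' * card L'" unfolding GS_def
      using sum_ind[OF insert(1) c'(2), of c'] c'(5) sum.cong[of "Pow F" "Pow F" f' "\<lambda>Y. if Y \<in> L' then c' else 0"] by simp
    have eq: "c' * card L' = 2 * (c0 * card L0)" using GF GF' ke1 by (simp add: E_def)
    have sub: "L0 \<subseteq> L'"
    proof
      fix Y assume "Y \<in> L0"
      then have "Y \<subseteq> F" "f Y = c0" using c0 by auto
      then have "f' Y \<noteq> 0" using c0(1) by (simp add: f'_def)
      then show "Y \<in> L'" using c'(5)[OF \<open>Y \<subseteq> F\<close>] by (auto split: if_splits)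
    qed
    have cge: "c' \<ge> c0" using c0f c'f by simp
    have fi: "f (insert e Y) = f' Y - f Y" if "Y \<subseteq> F" for Y by (simp add: f'_def)
    show ?thesis
    proof (cases "L0 = L'")
      case True
      then have "c' = 2 * c0" using eq finL0 c0(3) by (cases "card L0 = 0") auto
      show ?thesis
      proof (rule assemble[OF insert(1,2) c0(1-4), of L0])
        show "L0 \<subseteq> Pow F" by fact
        show "symd A B \<in> L0" if "A \<in> L0" "B \<in> L0" for A B using that c0(4) by auto
        show "symd A B \<in> L0" if "A \<in> L0" "B \<in> L0" for A B using that c0(4) by auto
        show "f Y = (if Y \<in> L0 then c0 else 0)" if "Y \<subseteq> F" for Y using c0(5) that by auto
        show "f (insert e Y) = (if Y \<in> L0 then c0 else 0)" if "Y \<subseteq> F" for Y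
          using fi[OF that] c0(5)[OF that] c'(5)[OF that] True \<open>c' = 2 * c0\<close> by auto
      qed
    next
      case False
      then obtain a where a: "a \<in> L'" "a \<notin> L0" using sub by auto
      have sdsd: "symd A (symd A B) = B" for A B :: "'a set" unfolding symd_def by blast
      have img: "symd a ` L0 \<subseteq> L' - L0"
      proof
        fix Y assume "Y \<in> symd a ` L0"
        then obtain l where l: "l \<in> L0" "Y = symd a l" by auto
        have "Y \<in> L'" using c'(4) a(1) sub l by auto
        moreover have "Y \<notin> L0"
        proof
          assume "Y \<in> L0"
          then have "symd Y l \<in> L0" using c0(4) l by auto
          moreover have "symd Y l = a" using l(2) unfolding symd_def by blast
          ultimately show False using a by simp
        qed
        ultimately show "Y \<in> L' - L0" by simp
      qed
      have inj: "inj_on (symd a) L0" by (metis inj_on_def sdsd)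
      have cimg: "card (symd a ` L0) = card L0" using card_image[OF inj] .
      have "card L0 \<le> card (L' - L0)" using card_mono[OF _ img] finL' cimg by simp
      moreover have "card L' = card L0 + card (L' - L0)"
        using card_Diff_subset[OF finL0 sub] card_mono[OF finL' sub] by simp
      ultimately have cL: "card L' \<ge> 2 * card L0" by simp
      have cL0: "card L0 > 0" using finL0 c0(3) card_gt_0_iff by blast
      have "c0 * card L' \<le> c' * card L'" using cge by simp
      then have "c0 * card L' \<le> c0 * (2 * card L0)" using eq by simp
      then have "card L' \<le> 2 * card L0" using c0(1) by simp
      then have cL2: "card L' = 2 * card L0" using cL by simp
      then have "c' = c0" using eq cL0 by simp
      have cdiff: "card (L' - L0) = card L0"
        using cL2 card_Diff_subset[OF finL0 sub] by simp
      have imgeq: "symd a ` L0 = L' - L0"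
        using card_subset_eq[OF _ img] finL' cimg cdiff by simp
      show ?thesis
      proof (rule assemble[OF insert(1,2) c0(1-4), of "L' - L0"])
        show "L' - L0 \<subseteq> Pow F" using c'(2) by auto
        show "symd A B \<in> L' - L0" if "A \<in> L0" "B \<in> L' - L0" for A B
        proof -
          have "symd A B \<in> L'" using that sub c'(4) by auto
          moreover have "symd A B \<notin> L0"
          proof
            assume "symd A B \<in> L0"
            then have "symd A (symd A B) \<in> L0" using c0(4) that by auto
            then show False using sdsd that by simp
          qed
          ultimately show ?thesis by simp
        qed
        show "symd A B \<in> L0" if "A \<in> L' - L0" "B \<in> L' - L0" for A B
        proof -
          have "A \<in> symd a ` L0" "B \<in> symd a ` L0" using that imgeq by simp_all
          then obtain l1 l2 where "l1 \<in> L0" "l2 \<in> L0" "A = symd a l1" "B = symd a l2"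
            by blast
          moreover have "symd (symd a l1) (symd a l2) = symd l1 l2" unfolding symd_def by blast
          ultimately show ?thesis using c0(4) by auto
        qed
        show "f Y = (if Y \<in> L0 then c0 else 0)" if "Y \<subseteq> F" for Y using c0(5) that by auto
        show "f (insert e Y) = (if Y \<in> L' - L0 then c0 else 0)" if "Y \<subseteq> F" for Y
          using fi[OF that] c0(5)[OF that] c'(5)[OF that] sub \<open>c' = c0\<close> by auto
      qed
    qed
  qed
qed

lemma pow2_div:
  assumes "(a::nat) * 2^k = 2^m"
  shows "\<exists>j. a = 2^j"
proof -
  have "a > 0" using assms by (cases a) auto
  then have "2^k \<le> (2::nat)^m" using assms by (metis dvd_imp_le dvd_triv_right zero_less_power zero_less_numeral)
  then have km: "k \<le> m" by simp
  then have "(2::nat)^m = 2^(m-k) * 2^k" by (simp add: power_add[symmetric])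
  then show ?thesis using assms by (intro exI[of _ "m-k"]) simp
qed

lemma hyp_from:
  assumes fin: "finite E" and pm: "powerful_multiset E f"
    and rk: "\<forall>X. X \<subseteq> E \<longrightarrow> rank_ms E f X \<le> real (card X)"
  shows "HYP E f"
  unfolding HYP_def
proof (intro conjI allI impI)
  show f0: "f {} \<noteq> 0" using pm by (simp add: powerful_multiset_def)
  fix X assume X: "X \<subseteq> E"
  define N where "N = GS f E"
  define D where "D = GS f (E - X)"
  have Dpos: "D > 0" unfolding D_def using GS_pos[of "E - X" f] fin f0 by simp
  have DN: "D \<le> N" unfolding D_def N_def using GS_mono[OF fin, of "E - X"] by auto
  have r: "rank_ms E f X = log 2 (real N / real D)"
    by (simp add: rank_ms_def N_def D_def GS_def)
  obtain m where m: "log 2 (real N / real D) = of_int m"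
    using pm X r unfolding powerful_multiset_def by (metis Ints_cases)
  have q: "real N / real D \<ge> 1" using DN Dpos by simp
  have "log 2 (real N / real D) \<ge> 0" using q by simp
  then have m0: "m \<ge> 0" using m by simp
  have "rank_ms E f X \<le> real (card X)" using rk X by blast
  then have "real_of_int m \<le> real (card X)" using m r by simp
  then have mle: "m \<le> card X" by linarith
  have "real N / real D = 2 powr (log 2 (real N / real D))" using q by simp
  also have "\<dots> = 2 powr (real (nat m))" using m m0 by simp
  also have "\<dots> = 2 ^ nat m" by (simp add: powr_realpow)
  finally have "real N = 2 ^ nat m * real D" using Dpos by (simp add: field_simps)
  then have "N = 2 ^ nat m * D" by (metis of_nat_eq_iff of_nat_mult of_nat_numeral of_nat_power)
  then show "\<exists>k. k \<le> card X \<and> GS f E = 2 ^ k * GS f (E - X)"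
    using mle m0 by (intro exI[of _ "nat m"]) (simp add: N_def D_def)
qed

theorem theorem7:
  fixes E :: "'a set" and f :: "'a set \<Rightarrow> nat"
  assumes "finite E"
    and "powerful_multiset E f"
    and "\<forall>X. X \<subseteq> E \<longrightarrow> rank_ms E f X \<le> real (card X)"
  shows "\<exists>(E2 :: 'a set) L. powerful_set E2 L \<and> linear_set L \<and>
           ms_isomorphic E f E2 (set_indicator L)"
proof -
  have H: "HYP E f" using hyp_from assms by blast
  obtain c L where cL: "c > 0" "L \<subseteq> Pow E" "{} \<in> L" "\<forall>A\<in>L. \<forall>B\<in>L. symd A B \<in> L"
      "\<And>Y. Y \<subseteq> E \<Longrightarrow> f Y = (if Y \<in> L then c else 0)"
    using key[OF assms(1) H] unfolding CONC_def by blast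
  have HE: "\<And>X. X \<subseteq> E \<Longrightarrow> \<exists>k. k \<le> card X \<and> GS f E = 2^k * GS f (E - X)"
    using H unfolding HYP_def by blast
  have GX: "GS f X = c * card {Y \<in> L. Y \<subseteq> X}" if X: "X \<subseteq> E" for X
  proof -
    have fX: "finite X" using X assms(1) finite_subset by blast
    have "GS f X = (\<Sum>Y\<in>Pow X. if Y \<in> {Y \<in> L. Y \<subseteq> X} then c else 0)"
      unfolding GS_def using cL(5) X by (intro sum.cong) auto
    also have "\<dots> = c * card {Y \<in> L. Y \<subseteq> X}" by (rule sum_ind[OF fX]) auto
    finally show ?thesis .
  qed
  have G0: "GS f {} = c" using cL(5)[of "{}"] cL(3) by (simp add: GS_def)
  obtain k0 where k0: "GS f E = 2^k0 * GS f (E - E)" using HE[of E] by blast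
  have LE: "{Y \<in> L. Y \<subseteq> E} = L" using cL(2) by auto
  then have cardL: "card L = 2^k0" using GX[of E] k0 G0 cL(1) by simp
  have "powerful_set E L" unfolding powerful_set_def
  proof (intro conjI allI impI)
    show "L \<subseteq> Pow E" by fact
    fix X assume X: "X \<subseteq> E"
    obtain k where k: "GS f E = 2^k * GS f (E - (E - X))" using HE[of "E - X"] by blast
    have "E - (E - X) = X" using X by auto
    then have "c * card L = 2^k * (c * card {Y \<in> L. Y \<subseteq> X})" using k GX[OF X] GX[of E] LE by simp
    then have "card {Y \<in> L. Y \<subseteq> X} * 2^k = 2^k0" using cL(1) cardL by (simp add: algebra_simps)
    then show "\<exists>j::nat. card {Y \<in> L. Y \<subseteq> X} = 2^j" by (rule pow2_div)
  qed
  moreover have "linear_set L" using cL(3,4) unfolding linear_set_def symd_def by blast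
  moreover have "ms_isomorphic E f E (set_indicator L)" unfolding ms_isomorphic_def
    using cL(1,5) by (intro exI[of _ id] exI[of _ "real c"]) (auto simp: set_indicator_def)
  ultimately show ?thesis by blast
qed

end
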